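(* For $\alpha\in(-\pi/2,\pi/2]$ and $\beta\in(-\pi/4,0)\cup(0,\pi/4)$ let $$Q(\alpha)=\begin{bmatrix}\cos\alpha&\sin\alpha\\-\sin\alpha&\cos\alpha\end{bmatrix},\qquad \mathbf{h}(\beta)=\begin{bmatrix}\cos\beta\\ \jmath\sin\beta\end{bmatrix},\qquad \mathbf{g}(\alpha,\beta)=Q(\alpha)\mathbf{h}(\beta)\in\mathbb{C}^2,$$ where $\jmath=\sqrt{-1}$. For such $\alpha_p,\beta_p,\alpha_q,\beta_q$, put $\mathbf{g}_p=\mathbf{g}(\alpha_p,\beta_p)$ and $\mathbf{g}_q=\mathbf{g}(\alpha_q,\beta_q)$. Then $\lvert\mathbf{g}_p^{\mathsf H}\mathbf{g}_q\rvert=1$ if and only if $\alpha_p=\alpha_q+k\pi$ for some $k\in\mathbb{Z}$ and $\beta_p=\beta_q$.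
   Context: $X^{\mathsf H}$ denotes conjugate transpose. *)

theory Defs
  imports "HOL-Analysis.Analysis"
begin

definition Qmat :: "real \<Rightarrow> complex^2^2" where
  "Qmat a = vector [vector [complex_of_real (cos a), complex_of_real (sin a)],
                    vector [complex_of_real (- sin a), complex_of_real (cos a)]]"

definition hvec :: "real \<Rightarrow> complex^2" where
  "hvec b = vector [complex_of_real (cos b), \<i> * complex_of_real (sin b)]"

definition gvec :: "real \<Rightarrow> real \<Rightarrow> complex^2" where
  "gvec a b = Qmat a *v hvec b"

definition herm_inner :: "complex^'n \<Rightarrow> complex^'n \<Rightarrow> complex" where
  "herm_inner x y = (\<Sum>i\<in>UNIV. cnj (x $ i) * y $ i)"

end

theory Submission
  imports Defs
begin
lemma inner_eq: "herm_inner (gvec ap bp) (gvec aq bq) =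
  Complex (cos (aq-ap) * cos (bp-bq)) (sin (aq-ap) * sin (bp+bq))"
proof -
  have s: "\<And>f::2\<Rightarrow>complex. sum f UNIV = f 1 + f 2"
    by (simp add: UNIV_2)
  show ?thesis
    unfolding herm_inner_def gvec_def Qmat_def hvec_def s
    by (simp add: matrix_vector_mult_def s vector_def Complex_eq cos_diff sin_diff cos_add sin_add algebra_simps)
qed

theorem lemma6:
  fixes ap bp aq bq :: real
  assumes "- (pi/2) < ap" "ap \<le> pi/2"
      and "- (pi/2) < aq" "aq \<le> pi/2"
      and "bp \<in> {-(pi/4)<..<0} \<union> {0<..<pi/4}"
      and "bq \<in> {-(pi/4)<..<0} \<union> {0<..<pi/4}"
  shows "cmod (herm_inner (gvec ap bp) (gvec aq bq)) = 1 \<longleftrightarrow>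
         ((\<exists>k::int. ap = aq + of_int k * pi) \<and> bp = bq)"
proof -
  define t where "t = aq - ap"
  define A where "A = (cos (bp-bq))^2"
  define B where "B = (sin (bp+bq))^2"
  have bp: "-(pi/4) < bp" "bp < pi/4" and bq: "-(pi/4) < bq" "bq < pi/4"
    using assms(5,6) by auto
  have cm: "cmod (herm_inner (gvec ap bp) (gvec aq bq)) = 1 \<longleftrightarrow>
      (cos t)^2 * A + (sin t)^2 * B = 1"
    unfolding inner_eq cmod_def t_def A_def B_def
    by (simp add: power_mult_distrib)
  have A1: "A \<le> 1"
  proof -
    have "A = 1 - (sin (bp-bq))^2" unfolding A_def by (simp add: cos_squared_eq)
    thus ?thesis by simp
  qed
  have cpos: "cos (bp+bq) > 0" using bp bq by (intro cos_gt_zero_pi) auto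
  have B1: "B < 1"
  proof -
    have "B = 1 - (cos (bp+bq))^2" unfolding B_def by (simp add: sin_squared_eq)
    thus ?thesis using cpos by simp
  qed
  show ?thesis
  proof
    assume "cmod (herm_inner (gvec ap bp) (gvec aq bq)) = 1"
    hence e: "(cos t)^2 * A + (sin t)^2 * B = 1" using cm by simp
    have cs: "(cos t)^2 + (sin t)^2 = 1" by simp
    have s0: "(sin t)^2 = 0"
    proof (rule ccontr)
      assume "(sin t)^2 \<noteq> 0"
      hence "(sin t)^2 > 0" by simp
      hence "(sin t)^2 * B < (sin t)^2" using B1 by simp
      moreover have "(cos t)^2 * A \<le> (cos t)^2" using A1 by (simp add: mult_left_le)
      ultimately show False using e cs by linarith
    qed
    hence st: "sin t = 0" by simp
    then obtain k :: int where "t = of_int k * pi" using sin_zero_iff_int2 by blast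
    hence k: "ap = aq + of_int (-k) * pi" unfolding t_def by simp
    have "A = 1" using e s0 cs by simp
    hence "(sin (bp-bq))^2 = 0" unfolding A_def by (simp add: sin_squared_eq)
    hence "sin (bp-bq) = 0" by simp
    then obtain i :: int where i: "bp - bq = of_int i * pi" using sin_zero_iff_int2 by blast
    have "\<bar>of_int i * pi\<bar> < pi" using bp bq i by auto
    hence "\<bar>of_int i\<bar> < (1::real)" by (simp add: abs_mult)
    hence "i = 0" by linarith
    hence "bp = bq" using i by simp
    thus "(\<exists>k::int. ap = aq + of_int k * pi) \<and> bp = bq" using k by blast
  next
    assume "(\<exists>k::int. ap = aq + of_int k * pi) \<and> bp = bq"
    then obtain k :: int where k: "ap = aq + of_int k * pi" and b: "bp = bq" by blast
    have "t = of_int (-k) * pi" unfolding t_def k by simp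
    hence "sin t = 0" by (simp add: sin_zero_iff_int2)
    moreover have "A = 1" unfolding A_def b by simp
    ultimately show "cmod (herm_inner (gvec ap bp) (gvec aq bq)) = 1"
      using cm sin_cos_squared_add[of t] by simp
  qed
qed
end
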